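(* Let $c>2/\log e$ and let $n$ be any positive integer. If $d\in[n]$ and $m\ge c\,n\,2^{2d}$, then $\mathcal{F}\sim\mathcal{F}(m,n,d)^{\otimes 2}$ is unsatisfiable with high probability.
   Context: $\log$ denotes base-2 logarithm. $\mathcal{F}(m,n,d)$ is the distribution of random $d$-CNFs on $n$ variables obtained by sampling $m$ clauses independently and uniformly with replacement from the $\binom{n}{d}2^d$ clauses on $d$ distinct variables. For disjoint variable sets $X=\{x_1,\dots,x_n\}$ and $Y=\{y_1,\dots,y_n\}$, $\mathcal{F}(m,n,d)^{\otimes 2}$ is the distribution of $2d$-CNFs obtained by sampling $C^1_1\wedge\dots\wedge C^1_m\sim\mathcal{F}(m,n,d)$ on $X$ and independently $C^2_1\wedge\dots\wedge C^2_m\sim\mathcal{F}(m,n,d)$ on $Y$, and outputting $(C^1_1\vee C^2_1)\wedge\dots\wedge(C^1_m\vee C^2_m)$. "With high probability" means with probability tending to $1$ as $n\to\infty$. *)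

theory Defs
  imports "HOL-Probability.Probability"
begin

text \<open>A literal is a pair (variable index, polarity); variables of a formula on n
variables are indexed by 0..<n. A clause is a set of literals.\<close>

type_synonym lit = "nat \<times> bool"
type_synonym clause = "lit set"

definition dclauses :: "nat \<Rightarrow> nat \<Rightarrow> clause set" where
  "dclauses n d = {C. C \<subseteq> {..<n} \<times> UNIV \<and> card C = d \<and> inj_on fst C}"

definition lit_sat :: "(nat \<Rightarrow> bool) \<Rightarrow> lit \<Rightarrow> bool" where
  "lit_sat \<alpha> l = (\<alpha> (fst l) = snd l)"

definition clause_sat :: "(nat \<Rightarrow> bool) \<Rightarrow> clause \<Rightarrow> bool" where
  "clause_sat \<alpha> C = (\<exists>l\<in>C. lit_sat \<alpha> l)"

text \<open>A sample of F(m,n,d)^{\<otimes>2}: two independent sequences of m clauses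
(the first on X, the second on Y).\<close>
definition prod_sat :: "nat \<Rightarrow> (nat \<Rightarrow> clause) \<Rightarrow> (nat \<Rightarrow> clause) \<Rightarrow> bool" where
  "prod_sat m F1 F2 = (\<exists>\<alpha> \<beta>. \<forall>i<m. clause_sat \<alpha> (F1 i) \<or> clause_sat \<beta> (F2 i))"

text \<open>Sampling m clauses independently uniformly with replacement = uniform
distribution on sequences {0..<m} \<rightarrow> dclauses n d.\<close>
definition F_dist :: "nat \<Rightarrow> nat \<Rightarrow> nat \<Rightarrow> (nat \<Rightarrow> clause) pmf" where
  "F_dist m n d = pmf_of_set ({..<m} \<rightarrow>\<^sub>E dclauses n d)"

definition F_prod_dist :: "nat \<Rightarrow> nat \<Rightarrow> nat \<Rightarrow> ((nat \<Rightarrow> clause) \<times> (nat \<Rightarrow> clause)) pmf" where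
  "F_prod_dist m n d = pair_pmf (F_dist m n d) (F_dist m n d)"

definition prob_prod_sat :: "nat \<Rightarrow> nat \<Rightarrow> nat \<Rightarrow> real" where
  "prob_prod_sat m n d =
     measure_pmf.prob (F_prod_dist m n d) {(F1, F2). prod_sat m F1 F2}"

end

theory Submission
  imports Defs
begin

lemma pair_pmf_of_set:
  assumes "finite A" "A \<noteq> {}" "finite B" "B \<noteq> {}"
  shows "pair_pmf (pmf_of_set A) (pmf_of_set B) = pmf_of_set (A \<times> B)"
  by (rule pmf_eqI) (auto simp: pmf_pair assms card_cartesian_product indicator_def)

definition graph :: "nat set \<Rightarrow> (nat \<Rightarrow> bool) \<Rightarrow> clause" where
  "graph V h = (\<lambda>x. (x, h x)) ` V"

lemma finite_dclauses: "finite (dclauses n d)"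
proof -
  have "dclauses n d \<subseteq> Pow ({..<n} \<times> UNIV)" by (auto simp: dclauses_def)
  thus ?thesis by (rule finite_subset) simp
qed

lemma graph_in: assumes "V \<subseteq> {..<n}" "card V = d" shows "graph V h \<in> dclauses n d"
proof -
  have "inj_on (\<lambda>x. (x, h x)) V" by (auto intro: inj_onI)
  hence "card (graph V h) = d" using assms by (simp add: graph_def card_image)
  thus ?thesis using assms by (auto simp: dclauses_def graph_def intro: inj_onI)
qed

lemma fst_graph: "fst ` graph V h = V"
  by (force simp: graph_def image_image)

lemma card_dclauses:
  "card (dclauses n d) = card {V. V \<subseteq> {..<n} \<and> card V = d} * 2 ^ d"
proof -
  let ?Vs = "{V. V \<subseteq> {..<n} \<and> card V = d}"
  let ?g = "\<lambda>(V, h). graph V h"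
  let ?A = "SIGMA V:?Vs. V \<rightarrow>\<^sub>E (UNIV :: bool set)"
  have finVs: "finite ?Vs" by (rule finite_subset[of _ "Pow {..<n}"]) auto
  have inj: "inj_on ?g ?A"
  proof (rule inj_onI, clarsimp)
    fix V h V' h'
    assume h: "h \<in> V \<rightarrow>\<^sub>E UNIV" and h': "h' \<in> V' \<rightarrow>\<^sub>E UNIV" and eq: "graph V h = graph V' h'"
    have "V = V'" using fst_graph[of V h] fst_graph[of V' h'] eq by simp
    moreover have "h = h'"
    proof
      fix x show "h x = h' x"
      proof (cases "x \<in> V")
        case True
        hence "(x, h x) \<in> graph V' h'" using eq by (auto simp: graph_def)
        thus ?thesis by (auto simp: graph_def)
      next
        case False thus ?thesis using h h' \<open>V = V'\<close> by (auto simp: PiE_def extensional_def)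
      qed
    qed
    ultimately show "V = V' \<and> h = h'" by simp
  qed
  have img: "?g ` ?A = dclauses n d"
  proof
    show "?g ` ?A \<subseteq> dclauses n d" using graph_in by auto
  next
    show "dclauses n d \<subseteq> ?g ` ?A"
    proof
      fix C assume C: "C \<in> dclauses n d"
      let ?V = "fst ` C"
      let ?h = "restrict (\<lambda>x. (x, True) \<in> C) ?V"
      have inj: "inj_on fst C" and sub: "C \<subseteq> {..<n} \<times> UNIV" and cC: "card C = d"
        using C by (auto simp: dclauses_def)
      have "?V \<in> ?Vs" using sub cC inj by (auto simp: card_image)
      moreover have "C = graph ?V ?h"
      proof
        show "C \<subseteq> graph ?V ?h"
        proof
          fix p assume p: "p \<in> C"
          obtain x b where pxb: "p = (x, b)" by (cases p)
          have "b = ((x, True) \<in> C)"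
          proof (cases b)
            case False
            have "(x, True) \<notin> C"
            proof
              assume "(x, True) \<in> C"
              with p pxb False show False using inj_onD[OF inj, of "(x, False)" "(x, True)"] by simp
            qed
            thus ?thesis using False by simp
          qed (use p pxb in simp)
          thus "p \<in> graph ?V ?h" using p pxb by (force simp: graph_def)
        qed
      next
        show "graph ?V ?h \<subseteq> C"
        proof
          fix p assume "p \<in> graph ?V ?h"
          then obtain x b where xb: "(x, b) \<in> C" and p: "p = (x, (x, True) \<in> C)"
            by (auto simp: graph_def)
          show "p \<in> C" using xb p by (cases b; cases "(x, True) \<in> C") auto
        qed
      qed
      ultimately show "C \<in> ?g ` ?A" by (intro image_eqI[where x = "(?V, ?h)"]) auto
    qed
  qed
  have "card (dclauses n d) = card ?A" using card_image[OF inj] img by simp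
  also have "\<dots> = (\<Sum>V\<in>?Vs. 2 ^ d)"
  proof -
    have fV: "\<forall>V\<in>?Vs. finite V"
    proof
      fix V assume "V \<in> ?Vs"
      hence "V \<subseteq> {..<n}" by simp
      thus "finite V" by (rule finite_subset) simp
    qed
    have fB: "\<forall>V\<in>?Vs. finite (V \<rightarrow>\<^sub>E (UNIV::bool set))" using fV by (simp add: finite_PiE)
    have "card ?A = (\<Sum>V\<in>?Vs. card (V \<rightarrow>\<^sub>E (UNIV::bool set)))" using card_SigmaI[OF finVs fB] .
    also have "\<dots> = (\<Sum>V\<in>?Vs. 2 ^ d)" using fV by (intro sum.cong) (simp_all add: card_PiE)
    finally show ?thesis .
  qed
  finally show ?thesis by simp
qed

lemma card_falsified:
  "card {C \<in> dclauses n d. \<not> clause_sat \<alpha> C} = card {V. V \<subseteq> {..<n} \<and> card V = d}"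
proof -
  let ?Vs = "{V. V \<subseteq> {..<n} \<and> card V = d}"
  let ?g = "\<lambda>V. graph V (Not \<circ> \<alpha>)"
  have inj: "inj_on ?g ?Vs"
  proof (rule inj_onI)
    fix V W assume "?g V = ?g W"
    hence "fst ` ?g V = fst ` ?g W" by simp
    thus "V = W" by (simp add: fst_graph)
  qed
  have eq: "?g ` ?Vs = {C \<in> dclauses n d. \<not> clause_sat \<alpha> C}"
  proof
    show "?g ` ?Vs \<subseteq> {C \<in> dclauses n d. \<not> clause_sat \<alpha> C}"
    proof (rule image_subsetI)
      fix V assume V: "V \<in> ?Vs"
      have "?g V \<in> dclauses n d" using V by (intro graph_in) auto
      moreover have "\<not> clause_sat \<alpha> (?g V)" by (auto simp: clause_sat_def lit_sat_def graph_def)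
      ultimately show "?g V \<in> {C \<in> dclauses n d. \<not> clause_sat \<alpha> C}" by simp
    qed
  next
    show "{C \<in> dclauses n d. \<not> clause_sat \<alpha> C} \<subseteq> ?g ` ?Vs"
    proof clarify
      fix C assume C: "C \<in> dclauses n d" and ns: "\<not> clause_sat \<alpha> C"
      have inj: "inj_on fst C" and sub: "C \<subseteq> {..<n} \<times> UNIV" and cC: "card C = d"
        using C by (auto simp: dclauses_def)
      have "fst ` C \<in> ?Vs" using sub cC inj by (auto simp: card_image)
      moreover have "C = ?g (fst ` C)"
      proof -
        have all: "\<forall>p\<in>C. snd p = (\<not> \<alpha> (fst p))" using ns by (auto simp: clause_sat_def lit_sat_def)
        have "?g (fst ` C) = (\<lambda>p. (fst p, \<not> \<alpha> (fst p))) ` C" by (simp add: graph_def image_image)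
        also have "\<dots> = (\<lambda>p. p) ` C" using all by (intro image_cong refl) (simp add: prod_eq_iff)
        finally show ?thesis by simp
      qed
      ultimately show "C \<in> ?g ` ?Vs" by blast
    qed
  qed
  have "card (?g ` ?Vs) = card ?Vs" by (rule card_image[OF inj])
  thus ?thesis by (simp only: eq)
qed


lemma card_pos_Vs: "d \<le> n \<Longrightarrow> card {V. V \<subseteq> {..<n} \<and> card V = d} > 0"
proof -
  assume "d \<le> n"
  have fin: "finite {V. V \<subseteq> {..<n} \<and> card V = d}" by (rule finite_subset[of _ "Pow {..<n}"]) auto
  have "{..<d} \<in> {V. V \<subseteq> {..<n} \<and> card V = d}" using \<open>d \<le> n\<close> by auto
  thus ?thesis using fin by (metis card_gt_0_iff empty_iff)
qed

lemma clause_sat_restrict: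
  assumes "C \<subseteq> {..<n} \<times> UNIV"
  shows "clause_sat (restrict \<alpha> {..<n}) C = clause_sat \<alpha> C"
  unfolding clause_sat_def lit_sat_def
proof (intro bex_cong refl)
  fix l assume "l \<in> C"
  hence "fst l \<in> {..<n}" using assms by auto
  thus "(restrict \<alpha> {..<n} (fst l) = snd l) = (\<alpha> (fst l) = snd l)" by simp
qed

lemma prob_bound:
  assumes "d \<le> n"
  shows "prob_prod_sat m n d \<le> 4 ^ n * (1 - 1 / 4 ^ d) ^ m"
proof -
  define D where "D = dclauses n d"
  define S where "S = {..<m} \<rightarrow>\<^sub>E D"
  define v where "v = card {V. V \<subseteq> {..<n} \<and> card V = d}"
  define N where "N = card D"
  have v0: "v > 0" using card_pos_Vs[OF assms] by (simp add: v_def)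
  have N: "N = v * 2 ^ d" by (simp add: N_def D_def v_def card_dclauses)
  have finD: "finite D" by (simp add: D_def finite_dclauses)
  have Dne: "D \<noteq> {}" using N v0 N_def by auto
  have finS: "finite S" using finD by (simp add: S_def finite_PiE)
  have Sne: "S \<noteq> {}" using Dne by (simp add: S_def PiE_eq_empty_iff)
  have cS: "card S = N ^ m" using finD by (simp add: S_def card_PiE N_def)
  define E where "E = {(F1, F2). prod_sat m F1 F2}"
  define A where "A = {..<n} \<rightarrow>\<^sub>E (UNIV :: bool set)"
  have finA: "finite A" by (simp add: A_def finite_PiE)
  have cA: "card A = 2 ^ n" by (simp add: A_def card_PiE)
  define Eab where "Eab = (\<lambda>a b. {p \<in> S \<times> S. \<forall>i<m. clause_sat a (fst p i) \<or> clause_sat b (snd p i)})"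
  define Kset where "Kset = (\<lambda>a b. {q \<in> D \<times> D. clause_sat a (fst q) \<or> clause_sat b (snd q)})"
  have cK: "card (Kset a b) = v^2 * (4 ^ d - 1)" for a b
  proof -
    have eq: "Kset a b = D \<times> D - {C \<in> D. \<not> clause_sat a C} \<times> {C \<in> D. \<not> clause_sat b C}"
      by (auto simp: Kset_def)
    have "card (Kset a b) = N * N - v * v"
      unfolding eq using finD
      by (subst card_Diff_subset) (auto simp: card_cartesian_product N_def v_def D_def card_falsified)
    also have "\<dots> = v^2 * (4 ^ d - 1)"
    proof -
      have f: "(2::nat)^d * 2^d = 4^d" by (simp flip: power_mult_distrib)
      have "N * N = (v * v) * (2^d * 2^d)" by (simp only: N mult_ac)
      also have "\<dots> = v^2 * 4^d" by (simp only: f power2_eq_square)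
      finally have "N * N - v * v = v^2 * 4^d - v^2 * 1" by (simp add: power2_eq_square)
      thus ?thesis by (simp only: diff_mult_distrib2)
    qed
    finally show ?thesis .
  qed
  have cE: "card (Eab a b) = card (Kset a b) ^ m" for a b
  proof -
    let ?f = "\<lambda>p. \<lambda>i\<in>{..<m}. (fst p i, snd p i)"
    let ?g = "\<lambda>G. (\<lambda>i\<in>{..<m}. fst (G i), \<lambda>i\<in>{..<m}. snd (G i))"
    have "bij_betw ?f (Eab a b) ({..<m} \<rightarrow>\<^sub>E Kset a b)"
    proof (rule bij_betw_byWitness[where f' = ?g])
      show "\<forall>p\<in>Eab a b. ?g (?f p) = p"
        by (auto simp: Eab_def S_def PiE_def extensional_def fun_eq_iff)
      show "\<forall>G\<in>{..<m} \<rightarrow>\<^sub>E Kset a b. ?f (?g G) = G"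
        by (auto simp: PiE_def extensional_def fun_eq_iff)
      show "?f ` Eab a b \<subseteq> {..<m} \<rightarrow>\<^sub>E Kset a b"
        by (auto simp: Eab_def S_def Kset_def)
      show "?g ` ({..<m} \<rightarrow>\<^sub>E Kset a b) \<subseteq> Eab a b"
        by (auto simp: Eab_def S_def Kset_def PiE_def Pi_def)
    qed
    hence "card (Eab a b) = card ({..<m} \<rightarrow>\<^sub>E Kset a b)" by (rule bij_betw_same_card)
    thus ?thesis by (simp add: card_PiE)
  qed
  have sub: "(S \<times> S) \<inter> E \<subseteq> (\<Union>a\<in>A. \<Union>b\<in>A. Eab a b)"
  proof clarify
    fix F1 F2 assume F1: "F1 \<in> S" and F2: "F2 \<in> S" and "(F1, F2) \<in> E"
    then obtain \<alpha> \<beta> where ab: "\<forall>i<m. clause_sat \<alpha> (F1 i) \<or> clause_sat \<beta> (F2 i)"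
      by (auto simp: E_def prod_sat_def)
    have cl: "F i \<subseteq> {..<n} \<times> UNIV" if "F \<in> S" "i < m" for F i
      using that by (auto simp: S_def D_def dclauses_def)
    have "(F1, F2) \<in> Eab (restrict \<alpha> {..<n}) (restrict \<beta> {..<n})"
      using ab F1 F2 cl by (auto simp: Eab_def clause_sat_restrict)
    moreover have "restrict \<alpha> {..<n} \<in> A" "restrict \<beta> {..<n} \<in> A" by (auto simp: A_def)
    ultimately show "(F1, F2) \<in> (\<Union>a\<in>A. \<Union>b\<in>A. Eab a b)" by blast
  qed
  define K where "K = v^2 * (4 ^ d - 1)"
  have "card ((S \<times> S) \<inter> E) \<le> card (\<Union>a\<in>A. \<Union>b\<in>A. Eab a b)"
    by (rule card_mono[OF _ sub], intro finite_UN_I finA) (simp add: Eab_def finS)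
  also have "\<dots> \<le> (\<Sum>a\<in>A. card (\<Union>b\<in>A. Eab a b))" by (rule card_UN_le[OF finA])
  also have "\<dots> \<le> (\<Sum>a\<in>A. \<Sum>b\<in>A. card (Eab a b))"
    by (rule sum_mono, rule card_UN_le[OF finA])
  also have "\<dots> = 2 ^ n * 2 ^ n * K ^ m" by (simp add: cE cK cA K_def)
  finally have cnt: "real (card ((S \<times> S) \<inter> E)) \<le> 4 ^ n * real K ^ m"
    by (metis (mono_tags) of_nat_le_iff of_nat_mult of_nat_power of_nat_numeral power_mult_distrib mult_2 numeral_Bit0 numeral_One mult.commute)
  have "prob_prod_sat m n d = real (card ((S \<times> S) \<inter> E)) / real (card (S \<times> S))"
    unfolding prob_prod_sat_def F_prod_dist_def F_dist_def
    by (simp add: pair_pmf_of_set finS Sne flip: S_def D_def E_def)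
       (subst measure_pmf_of_set, auto simp: finS Sne card_cartesian_product)
  also have "\<dots> \<le> 4 ^ n * real K ^ m / real N ^ (2 * m)"
  proof -
    have "real (card (S \<times> S)) = real N ^ (2 * m)"
      by (simp add: card_cartesian_product cS mult_2 power_add)
    thus ?thesis using cnt by (simp add: divide_right_mono)
  qed
  also have "\<dots> = 4 ^ n * (real K / real N ^ 2) ^ m"
    by (simp add: power_divide power_mult)
  also have "real K / real N ^ 2 = 1 - 1 / 4 ^ d"
  proof -
    have "(4::real) ^ d \<ge> 1" by simp
    hence "real K = real v ^ 2 * (4 ^ d - 1)" by (simp add: K_def of_nat_diff)
    moreover have "real N ^ 2 = real v ^ 2 * 4 ^ d"
    proof -
      have "(2::real)^d * 2^d = 4^d" by (simp flip: power_mult_distrib)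
      thus ?thesis by (simp add: N power2_eq_square algebra_simps)
    qed
    ultimately show ?thesis using v0 by (simp add: field_simps)
  qed
  finally show ?thesis .
qed


theorem mainTheorem4:
  fixes c :: real and d m :: "nat \<Rightarrow> nat"
  assumes "c > 2 / log 2 (exp 1)"
    and "\<forall>n\<ge>1. 1 \<le> d n \<and> d n \<le> n"
    and "\<forall>n\<ge>1. real (m n) \<ge> c * real n * 2 ^ (2 * d n)"
  shows "(\<lambda>n. prob_prod_sat (m n) n (d n)) \<longlonglongrightarrow> 0"
proof -
  have l2: "2 / log 2 (exp 1) = ln 4"
  proof -
    have "ln (4::real) = ln (2 ^ 2)" by simp
    also have "\<dots> = 2 * ln 2" by (subst ln_realpow) auto
    finally show ?thesis by (simp add: log_def)
  qed
  have cgt: "c > ln 4" using assms(1) l2 by simp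
  define q where "q = 4 * exp (- c)"
  have q0: "q \<ge> 0" by (simp add: q_def)
  have q1: "q < 1"
  proof -
    have "q = exp (ln 4 - c)" by (simp add: q_def exp_diff exp_minus field_simps)
    also have "\<dots> < 1" using cgt by simp
    finally show ?thesis .
  qed
  have lim: "(\<lambda>n. q ^ n) \<longlonglongrightarrow> 0" using q0 q1 by (intro LIMSEQ_power_zero) simp
  have bound: "norm (prob_prod_sat (m n) n (d n)) \<le> q ^ n" if n: "n \<ge> 1" for n
  proof -
    have dn: "1 \<le> d n" "d n \<le> n" using assms(2) n by auto
    have mn: "real (m n) \<ge> c * real n * 4 ^ d n"
      using assms(3) n by (simp add: power_mult)
    define x where "x = (1::real) / 4 ^ d n"
    have x0: "0 < x" "x \<le> 1" by (auto simp: x_def)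
    have p0: "prob_prod_sat (m n) n (d n) \<ge> 0" by (simp add: prob_prod_sat_def)
    have "prob_prod_sat (m n) n (d n) \<le> 4 ^ n * (1 - x) ^ m n"
      using prob_bound[OF dn(2)] by (simp add: x_def)
    also have "(1 - x) ^ m n \<le> exp (- x) ^ m n"
      using x0 by (intro power_mono) (auto simp: exp_ge_add_one_self[of "-x", simplified])
    also have "exp (- x) ^ m n = exp (- (real (m n) * x))"
      by (simp flip: exp_of_nat_mult)
    also have "\<dots> \<le> exp (- (c * real n))"
    proof -
      have "c * real n \<le> real (m n) * x" using mn by (simp add: x_def field_simps)
      thus ?thesis by simp
    qed
    also have "exp (- (c * real n)) = exp (- c) ^ n"
      by (simp flip: exp_of_nat_mult)
    finally have "prob_prod_sat (m n) n (d n) \<le> 4 ^ n * exp (- c) ^ n" by simp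
    also have "\<dots> = q ^ n" by (simp add: q_def power_mult_distrib)
    finally show ?thesis using p0 by simp
  qed
  show ?thesis
    by (rule Lim_null_comparison[OF _ lim]) (use bound in \<open>auto simp: eventually_sequentially\<close>)
qed

end
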